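(* Let $1\le k\le N$ and let $\mathscr{K}$ be a collection of compact subsets of $\mathbb{C}^N$ totally ordered by inclusion, and let $K_\infty=\bigcap_{K\in\mathscr{K}}K$. Then $\widehat{K_\infty}^{\,k}=\bigcap_{K\in\mathscr{K}}\widehat{K}^{\,k}$ and $h_r^k(K_\infty)=\bigcap_{K\in\mathscr{K}}h_r^k(K)$.
   Context: Let $X\subset\mathbb{C}^N$ be compact. An analytic subvariety of $\mathbb{C}^N$ of pure codimension $m$ means a pure-dimensional analytic subvariety of $\mathbb{C}^N$ of dimension $N-m$. The polynomial hull is $\widehat{X}=\{z: |p(z)|\le\max_X|p| \text{ for all polynomials } p\}$. For $1\le k\le N$, the $k$-rational hull $h_r^k(X)$ is the set of $z\in\mathbb{C}^N$ such that every analytic subvariety of $\mathbb{C}^N$ of pure codimension $\le k$ that passes through $z$ intersects $X$. The $1$-polynomial hull is $\widehat{X}^{\,1}=\widehat{X}$; for $2\le k\le N$ the $k$-polynomial hull $\widehat{X}^{\,k}$ is the set of $z\in\mathbb{C}^N$ such that $z\in h_r^{k-1}(X)$ and $z\in\widehat{X\cap V}$ for every analytic subvariety $V$ of $\mathbb{C}^N$ of pure codimension $\le k-1$ passing through $z$. *)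

theory Defs
  imports "HOL-Analysis.Analysis"
begin

text \<open>Points of C^N are modelled as complex ^ 'n with N = CARD('n).\<close>

inductive_set poly_fun :: "(complex ^ 'n \<Rightarrow> complex) set" where
  pf_const: "(\<lambda>z. c) \<in> poly_fun"
| pf_coord: "(\<lambda>z. z $ i) \<in> poly_fun"
| pf_add: "p \<in> poly_fun \<Longrightarrow> q \<in> poly_fun \<Longrightarrow> (\<lambda>z. p z + q z) \<in> poly_fun"
| pf_mult: "p \<in> poly_fun \<Longrightarrow> q \<in> poly_fun \<Longrightarrow> (\<lambda>z. p z * q z) \<in> poly_fun"

definition complex_linear_fun :: "(complex ^ 'n \<Rightarrow> complex) \<Rightarrow> bool" where
  "complex_linear_fun L \<longleftrightarrow> linear L \<and> (\<forall>c v. L (c *s v) = c * L v)"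

definition holo_on :: "(complex ^ 'n) set \<Rightarrow> (complex ^ 'n \<Rightarrow> complex) \<Rightarrow> bool" where
  "holo_on U f \<longleftrightarrow> open U \<and>
     (\<forall>z\<in>U. \<exists>L. (f has_derivative L) (at z) \<and> complex_linear_fun L)"

definition analytic_subvariety :: "(complex ^ 'n) set \<Rightarrow> bool" where
  "analytic_subvariety V \<longleftrightarrow> closed V \<and>
     (\<forall>p\<in>V. \<exists>U F. open U \<and> p \<in> U \<and> finite F \<and> (\<forall>f\<in>F. holo_on U f) \<and>
        V \<inter> U = {z\<in>U. \<forall>f\<in>F. f z = 0})"

definition regular_point :: "(complex ^ 'n) set \<Rightarrow> nat \<Rightarrow> complex ^ 'n \<Rightarrow> bool" where
  "regular_point V m p \<longleftrightarrow> p \<in> V \<and>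
     (\<exists>U fs. open U \<and> p \<in> U \<and> (\<forall>i<m. holo_on U (fs i)) \<and>
        V \<inter> U = {z\<in>U. \<forall>i<m. fs i z = 0} \<and>
        (\<forall>z\<in>U. \<exists>Ls. (\<forall>i<m. (fs i has_derivative Ls i) (at z) \<and> complex_linear_fun (Ls i)) \<and>
            (\<forall>c::nat \<Rightarrow> complex. (\<forall>v. (\<Sum>i<m. c i * Ls i v) = 0) \<longrightarrow> (\<forall>i<m. c i = 0))))"

text \<open>Analytic subvariety of pure codimension m (pure dimension N - m): every regular point
  has codimension m and the regular points are dense in V.\<close>
definition pure_codim_subvariety :: "(complex ^ 'n) set \<Rightarrow> nat \<Rightarrow> bool" where
  "pure_codim_subvariety V m \<longleftrightarrow> analytic_subvariety V \<and>
     V \<subseteq> closure {p. regular_point V m p} \<and>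
     (\<forall>m' p. regular_point V m' p \<longrightarrow> m' = m)"

text \<open>Polynomial hull; max over X written as a supremum in the extended reals.\<close>
definition poly_hull :: "(complex ^ 'n) set \<Rightarrow> (complex ^ 'n) set" where
  "poly_hull X = {z. \<forall>p\<in>poly_fun. ereal (cmod (p z)) \<le> (SUP x\<in>X. ereal (cmod (p x)))}"

definition rat_hull :: "nat \<Rightarrow> (complex ^ 'n) set \<Rightarrow> (complex ^ 'n) set" where
  "rat_hull k X = {z. \<forall>V m. m \<le> k \<and> pure_codim_subvariety V m \<and> z \<in> V \<longrightarrow> V \<inter> X \<noteq> {}}"

definition k_poly_hull :: "nat \<Rightarrow> (complex ^ 'n) set \<Rightarrow> (complex ^ 'n) set" where
  "k_poly_hull k X = (if k \<le> 1 then poly_hull X else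
     {z. z \<in> rat_hull (k - 1) X \<and>
         (\<forall>V m. m \<le> k - 1 \<and> pure_codim_subvariety V m \<and> z \<in> V \<longrightarrow> z \<in> poly_hull (X \<inter> V))})"

end

theory Submission
  imports Defs
begin

lemma poly_fun_cont: "p \<in> poly_fun \<Longrightarrow> continuous_on UNIV p"
  by (induction rule: poly_fun.induct) (auto intro!: continuous_intros)

lemma chain_min:
  assumes "finite F" "F \<subseteq> KK" "K0 \<in> KK" "\<forall>A\<in>KK. \<forall>B\<in>KK. A \<subseteq> B \<or> B \<subseteq> A"
  shows "\<exists>M\<in>KK. M \<subseteq> K0 \<and> M \<subseteq> \<Inter>F"
  using assms(1,2)
proof (induction F rule: finite_induct)
  case empty show ?case using assms(3) by blast
next
  case (insert A F)
  then have "F \<subseteq> KK" by simp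
  then obtain M where M: "M \<in> KK" "M \<subseteq> K0" "M \<subseteq> \<Inter>F" using insert.IH by blast
  have A: "A \<in> KK" using insert.prems by simp
  show ?case
  proof (cases "A \<subseteq> M")
    case True
    have "A \<subseteq> \<Inter>(insert A F)" using True M(3) by auto
    then show ?thesis using A M True by (intro bexI[of _ A]) auto
  next
    case False then have "M \<subseteq> A" using assms(4) A M(1) by blast
    then have "M \<subseteq> \<Inter>(insert A F)" using M(3) by auto
    then show ?thesis using M by (intro bexI[of _ M]) auto
  qed
qed

lemma chain_fip:
  fixes KK :: "'a::t2_space set set"
  assumes "KK \<noteq> {}" "\<forall>K\<in>KK. compact K" "\<forall>A\<in>KK. \<forall>B\<in>KK. A \<subseteq> B \<or> B \<subseteq> A"
    "closed C" "\<Inter>KK \<inter> C = {}"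
  shows "\<exists>K\<in>KK. K \<inter> C = {}"
proof (rule ccontr)
  assume H: "\<not> ?thesis"
  obtain K0 where K0: "K0 \<in> KK" using assms(1) by auto
  have "(K0 \<inter> C) \<inter> \<Inter>KK \<noteq> {}"
  proof (rule compact_imp_fip)
    show "compact (K0 \<inter> C)" using assms(2,4) K0 compact_Int_closed by blast
    show "closed T" if "T \<in> KK" for T using that assms(2) compact_imp_closed by blast
    show "K0 \<inter> C \<inter> \<Inter>F' \<noteq> {}" if F: "finite F'" "F' \<subseteq> KK" for F'
    proof -
      obtain M where M: "M \<in> KK" "M \<subseteq> K0" "M \<subseteq> \<Inter>F'"
        using chain_min[OF F K0 assms(3)] by auto
      have "M \<inter> C \<noteq> {}" using H M(1) by auto
      then show ?thesis using M by blast
    qed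
  qed
  then show False using assms(5) by blast
qed

lemma poly_hull_mono: "A \<subseteq> B \<Longrightarrow> poly_hull A \<subseteq> poly_hull B"
  unfolding poly_hull_def by (auto intro: order_trans SUP_subset_mono)

lemma rat_hull_mono: "A \<subseteq> B \<Longrightarrow> rat_hull k A \<subseteq> rat_hull k B"
  unfolding rat_hull_def by blast

lemma k_poly_hull_mono:
  assumes "A \<subseteq> B" shows "k_poly_hull k A \<subseteq> k_poly_hull k B"
proof -
  have V: "poly_hull (A \<inter> V) \<subseteq> poly_hull (B \<inter> V)" for V
    using assms by (intro poly_hull_mono) blast
  have P: "poly_hull A \<subseteq> poly_hull B" using assms by (rule poly_hull_mono)
  have R: "rat_hull (k - 1) A \<subseteq> rat_hull (k - 1) B" using assms by (rule rat_hull_mono)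
  show ?thesis
  proof (cases "k \<le> 1")
    case True then show ?thesis using P unfolding k_poly_hull_def by simp
  next
    case False
    show ?thesis unfolding k_poly_hull_def using False
    proof (simp only: if_False, intro subsetI CollectI conjI allI impI)
      fix z assume z: "z \<in> {z. z \<in> rat_hull (k - 1) A \<and>
         (\<forall>V m. m \<le> k - 1 \<and> pure_codim_subvariety V m \<and> z \<in> V \<longrightarrow> z \<in> poly_hull (A \<inter> V))}"
      then show "z \<in> rat_hull (k - 1) B" using R by blast
      fix V m assume "m \<le> k - 1 \<and> pure_codim_subvariety V m \<and> z \<in> V"
      then show "z \<in> poly_hull (B \<inter> V)" using z V by blast
    qed
  qed
qed

lemma poly_hull_chain:
  fixes KK :: "(complex ^ 'n) set set"
  assumes "KK \<noteq> {}" "\<forall>K\<in>KK. compact K" "\<forall>A\<in>KK. \<forall>B\<in>KK. A \<subseteq> B \<or> B \<subseteq> A"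
    and z: "\<forall>K\<in>KK. z \<in> poly_hull K"
  shows "z \<in> poly_hull (\<Inter>KK)"
proof (rule ccontr)
  assume "z \<notin> poly_hull (\<Inter>KK)"
  then obtain p where p: "p \<in> poly_fun" and
    lt: "(SUP x\<in>\<Inter>KK. ereal (cmod (p x))) < ereal (cmod (p z))"
    unfolding poly_hull_def by (auto simp: not_le)
  have cont: "continuous_on UNIV (\<lambda>x. cmod (p x))"
    using poly_fun_cont[OF p] by (auto intro: continuous_intros)
  define C where "C = {x. cmod (p z) \<le> cmod (p x)}"
  have "closed C" unfolding C_def
    by (rule closed_Collect_le) (use cont in auto)
  have "\<Inter>KK \<inter> C = {}"
  proof (rule ccontr)
    assume "\<Inter>KK \<inter> C \<noteq> {}"
    then obtain x where x: "x \<in> \<Inter>KK" "cmod (p z) \<le> cmod (p x)" unfolding C_def by auto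
    have s: "ereal (cmod (p x)) \<le> (SUP x\<in>\<Inter>KK. ereal (cmod (p x)))"
      using x(1) by (rule SUP_upper)
    have "ereal (cmod (p x)) < ereal (cmod (p z))" using le_less_trans[OF s lt] .
    then show False using x(2) by simp
  qed
  then obtain K where K: "K \<in> KK" "K \<inter> C = {}"
    using chain_fip[OF assms(1-3) \<open>closed C\<close>] by auto
  have "(SUP x\<in>K. ereal (cmod (p x))) < ereal (cmod (p z))"
  proof (cases "K = {}")
    case True then show ?thesis by (simp add: bot_ereal_def)
  next
    case False
    obtain x0 where x0: "x0 \<in> K" "\<forall>y\<in>K. cmod (p y) \<le> cmod (p x0)"
      using continuous_attains_sup[OF _ False, of "\<lambda>x. cmod (p x)"] assms(2) K(1)
        continuous_on_subset[OF cont] by blast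
    have "(SUP x\<in>K. ereal (cmod (p x))) \<le> ereal (cmod (p x0))"
      using x0(2) by (auto intro!: SUP_least)
    also have "\<dots> < ereal (cmod (p z))" using x0(1) K(2) unfolding C_def by auto
    finally show ?thesis .
  qed
  moreover have "ereal (cmod (p z)) \<le> (SUP x\<in>K. ereal (cmod (p x)))"
    using z K(1) p unfolding poly_hull_def by blast
  ultimately show False by simp
qed

lemma rat_hull_chain:
  fixes KK :: "(complex ^ 'n) set set"
  assumes "KK \<noteq> {}" "\<forall>K\<in>KK. compact K" "\<forall>A\<in>KK. \<forall>B\<in>KK. A \<subseteq> B \<or> B \<subseteq> A"
    and z: "\<forall>K\<in>KK. z \<in> rat_hull k K"
  shows "z \<in> rat_hull k (\<Inter>KK)"
  unfolding rat_hull_def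
proof (intro CollectI allI impI)
  fix V m assume H: "m \<le> k \<and> pure_codim_subvariety V m \<and> z \<in> V"
  have "closed V" using H unfolding pure_codim_subvariety_def analytic_subvariety_def by auto
  show "V \<inter> \<Inter>KK \<noteq> {}"
  proof
    assume "V \<inter> \<Inter>KK = {}"
    then obtain K where "K \<in> KK" "K \<inter> V = {}"
      using chain_fip[OF assms(1-3) \<open>closed V\<close>] by blast
    then show False using z H unfolding rat_hull_def by blast
  qed
qed

lemma poly_hull_chain_V:
  fixes KK :: "(complex ^ 'n) set set"
  assumes "KK \<noteq> {}" "\<forall>K\<in>KK. compact K" "\<forall>A\<in>KK. \<forall>B\<in>KK. A \<subseteq> B \<or> B \<subseteq> A"
    and "closed V" and z: "\<forall>K\<in>KK. z \<in> poly_hull (K \<inter> V)"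
  shows "z \<in> poly_hull (\<Inter>KK \<inter> V)"
proof -
  have "z \<in> poly_hull (\<Inter>((\<lambda>K. K \<inter> V) ` KK))"
  proof (rule poly_hull_chain)
    show "(\<lambda>K. K \<inter> V) ` KK \<noteq> {}" using assms(1) by auto
    show "\<forall>K\<in>(\<lambda>K. K \<inter> V) ` KK. compact K" using assms(2,4) compact_Int_closed by blast
    show "\<forall>A\<in>(\<lambda>K. K \<inter> V) ` KK. \<forall>B\<in>(\<lambda>K. K \<inter> V) ` KK. A \<subseteq> B \<or> B \<subseteq> A"
      using assms(3) by blast
    show "\<forall>K\<in>(\<lambda>K. K \<inter> V) ` KK. z \<in> poly_hull K" using z by auto
  qed
  moreover have "\<Inter>((\<lambda>K. K \<inter> V) ` KK) = \<Inter>KK \<inter> V" using assms(1) by auto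
  ultimately show ?thesis by simp
qed

lemma UNIV_hulls: "k_poly_hull k (UNIV :: (complex^'n) set) = UNIV" "rat_hull k (UNIV :: (complex^'n) set) = UNIV"
proof -
  have P: "poly_hull A = UNIV" if "UNIV \<subseteq> A" for A :: "(complex^'n) set"
    using that unfolding poly_hull_def by (auto intro: SUP_upper)
  have R: "rat_hull j (UNIV :: (complex^'n) set) = UNIV" for j unfolding rat_hull_def by auto
  then show "rat_hull k (UNIV :: (complex^'n) set) = UNIV" by simp
  have "z \<in> poly_hull (UNIV \<inter> V)" if "z \<in> V" for z V
    using poly_hull_mono[of "{z}" "UNIV \<inter> V"] that unfolding poly_hull_def
    by (auto intro: SUP_upper)
  then show "k_poly_hull k (UNIV :: (complex^'n) set) = UNIV"
    unfolding k_poly_hull_def using P R by auto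
qed

theorem lemma4p1:
  fixes KK :: "(complex ^ 'n) set set" and k :: nat
  assumes "1 \<le> k" and "k \<le> CARD('n)"
    and "\<forall>K\<in>KK. compact K"
    and "\<forall>A\<in>KK. \<forall>B\<in>KK. A \<subseteq> B \<or> B \<subseteq> A"
  shows "k_poly_hull k (\<Inter>KK) = (\<Inter>K\<in>KK. k_poly_hull k K)
       \<and> rat_hull k (\<Inter>KK) = (\<Inter>K\<in>KK. rat_hull k K)"
proof (cases "KK = {}")
  case True then show ?thesis by (simp add: UNIV_hulls)
next
  case ne: False
  have R: "rat_hull j (\<Inter>KK) = (\<Inter>K\<in>KK. rat_hull j K)" for j
  proof
    show "rat_hull j (\<Inter>KK) \<subseteq> (\<Inter>K\<in>KK. rat_hull j K)"
      using rat_hull_mono[of "\<Inter>KK"] by blast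
    show "(\<Inter>K\<in>KK. rat_hull j K) \<subseteq> rat_hull j (\<Inter>KK)"
      using rat_hull_chain[OF ne assms(3,4)] by blast
  qed
  have P: "k_poly_hull k (\<Inter>KK) = (\<Inter>K\<in>KK. k_poly_hull k K)"
  proof
    show "k_poly_hull k (\<Inter>KK) \<subseteq> (\<Inter>K\<in>KK. k_poly_hull k K)"
      using k_poly_hull_mono[of "\<Inter>KK"] by blast
    show "(\<Inter>K\<in>KK. k_poly_hull k K) \<subseteq> k_poly_hull k (\<Inter>KK)"
    proof
      fix z assume z: "z \<in> (\<Inter>K\<in>KK. k_poly_hull k K)"
      show "z \<in> k_poly_hull k (\<Inter>KK)"
      proof (cases "k \<le> 1")
        case True
        then show ?thesis using z poly_hull_chain[OF ne assms(3,4), of z]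
          unfolding k_poly_hull_def by auto
      next
        case False
        have zr: "z \<in> rat_hull (k - 1) (\<Inter>KK)" using z False R unfolding k_poly_hull_def by auto
        have "z \<in> poly_hull (\<Inter>KK \<inter> V)" if H: "m \<le> k - 1 \<and> pure_codim_subvariety V m \<and> z \<in> V" for V m
        proof (rule poly_hull_chain_V[OF ne assms(3,4)])
          show "closed V" using H unfolding pure_codim_subvariety_def analytic_subvariety_def by auto
          show "\<forall>K\<in>KK. z \<in> poly_hull (K \<inter> V)" using z False H unfolding k_poly_hull_def by auto
        qed
        then show ?thesis using zr False unfolding k_poly_hull_def by auto
      qed
    qed
  qed
  show ?thesis using P R by simp
qed

end
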